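(* Let $\Omega\subset\mathbb{R}^N$ be a bounded open set. Let $(\beta_n)_{n\ge1}$ be a sequence of maximal monotone graphs in $\mathbb{R}\times\mathbb{R}$ converging to a maximal monotone graph $\beta$ in the sense of graphs. Let $(z_n)_{n\ge1}$, $(w_n)_{n\ge1}$ be sequences in $L^1(\Omega)$ with $w_n\in\beta_n(z_n)$ $\mathcal{L}^N$-a.e. in $\Omega$ for every $n$. If $(w_n)$ is bounded in $L^1(\Omega)$ and $z_n\to z$ in $L^1(\Omega)$, then $z\in\operatorname{dom}(\beta)$ $\mathcal{L}^N$-a.e. in $\Omega$.
   Context: $\beta_n\to\beta$ in the sense of graphs means: for every $(x,y)\in\beta$ there exist $(x_n,y_n)\in\beta_n$ with $x_n\to x$ and $y_n\to y$ (for maximal monotone graphs, equivalently $(I+\lambda\beta_n)^{-1}(r)\to(I+\lambda\beta)^{-1}(r)$ for all $\lambda>0$, $r\in\mathbb{R}$). $\operatorname{dom}(\beta)=\{r:\beta(r)\ne\emptyset\}$. *)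

theory Defs
  imports "HOL-Analysis.Analysis"
begin

definition monotone_graph :: "(real \<times> real) set \<Rightarrow> bool" where
  "monotone_graph G \<longleftrightarrow>
     (\<forall>x1 y1 x2 y2. (x1, y1) \<in> G \<longrightarrow> (x2, y2) \<in> G \<longrightarrow> (x1 - x2) * (y1 - y2) \<ge> 0)"

definition maximal_monotone_graph :: "(real \<times> real) set \<Rightarrow> bool" where
  "maximal_monotone_graph G \<longleftrightarrow>
     monotone_graph G \<and> (\<forall>H. monotone_graph H \<longrightarrow> G \<subseteq> H \<longrightarrow> H = G)"

definition graph_converges :: "(nat \<Rightarrow> (real \<times> real) set) \<Rightarrow> (real \<times> real) set \<Rightarrow> bool" where
  "graph_converges B b \<longleftrightarrow>
     (\<forall>x y. (x, y) \<in> b \<longrightarrow>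
        (\<exists>xs ys. (\<forall>n. (xs n, ys n) \<in> B n) \<and> xs \<longlonglongrightarrow> x \<and> ys \<longlonglongrightarrow> y))"

definition graph_dom :: "(real \<times> real) set \<Rightarrow> real set" where
  "graph_dom G = {r. \<exists>s. (r, s) \<in> G}"

end

theory Submission imports Defs "HOL-Library.Infinite_Set" begin

lemma limit_in_b:
  assumes conv: "graph_converges B b" and mb: "maximal_monotone_graph b"
    and mB: "\<And>n. monotone_graph (B n)"
    and phi: "strict_mono (\<phi>::nat\<Rightarrow>nat)"
    and inB: "\<And>k. (u k, v k) \<in> B (\<phi> k)"
    and ut: "u \<longlonglongrightarrow> t" and vy: "v \<longlonglongrightarrow> y"
  shows "(t, y) \<in> b"
proof -
  have key: "(t - a) * (y - c) \<ge> 0" if ac: "(a, c) \<in> b" for a c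
  proof -
    obtain xs ys where xy: "\<And>n. (xs n, ys n) \<in> B n" "xs \<longlonglongrightarrow> a" "ys \<longlonglongrightarrow> c"
      using conv ac unfolding graph_converges_def by blast
    have xa: "(\<lambda>k. xs (\<phi> k)) \<longlonglongrightarrow> a" using LIMSEQ_subseq_LIMSEQ[OF xy(2) phi] by (simp add: o_def)
    have yc: "(\<lambda>k. ys (\<phi> k)) \<longlonglongrightarrow> c" using LIMSEQ_subseq_LIMSEQ[OF xy(3) phi] by (simp add: o_def)
    have lim: "(\<lambda>k. (u k - xs (\<phi> k)) * (v k - ys (\<phi> k))) \<longlonglongrightarrow> (t - a) * (y - c)"
      by (intro tendsto_intros ut vy xa yc)
    have "\<forall>k. (u k - xs (\<phi> k)) * (v k - ys (\<phi> k)) \<ge> 0"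
      using mB inB xy(1) unfolding monotone_graph_def by blast
    then show ?thesis using LIMSEQ_le_const[OF lim] by blast
  qed
  have "monotone_graph (insert (t, y) b)"
    unfolding monotone_graph_def
  proof (intro allI impI)
    fix x1 y1 x2 y2 assume h: "(x1, y1) \<in> insert (t, y) b" "(x2, y2) \<in> insert (t, y) b"
    have mb': "monotone_graph b" using mb unfolding maximal_monotone_graph_def by blast
    show "0 \<le> (x1 - x2) * (y1 - y2)"
    proof (cases "(x1, y1) = (t, y)")
      case True
      then show ?thesis using h key[of x2 y2] by auto
    next
      case False
      then have b1: "(x1, y1) \<in> b" using h by auto
      show ?thesis
      proof (cases "(x2, y2) = (t, y)")
        case True
        have "0 \<le> (t - x1) * (y - y1)" using key[OF b1] .
        also have "(t - x1) * (y - y1) = (x1 - t) * (y1 - y)" by algebra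
        finally show ?thesis using True by simp
      next
        case False
        then show ?thesis using h b1 mb' unfolding monotone_graph_def by auto
      qed
    qed
  qed
  then have "insert (t, y) b = b" using mb unfolding maximal_monotone_graph_def by blast
  then show ?thesis by blast
qed

lemma pointwise:
  assumes conv: "graph_converges B b" and mb: "maximal_monotone_graph b"
    and mB: "\<And>n. monotone_graph (B n)"
    and r: "strict_mono (r::nat\<Rightarrow>nat)"
    and inB: "\<And>n. (p n, q n) \<in> B n"
    and pt: "(\<lambda>k. p (r k)) \<longlonglongrightarrow> t"
    and fr: "frequently (\<lambda>k. \<bar>q (r k)\<bar> \<le> M) sequentially"
  shows "t \<in> graph_dom b"
proof -
  have "infinite {k. \<bar>q (r k)\<bar> \<le> M}" using fr by (simp add: frequently_cofinite[symmetric] cofinite_eq_sequentially)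
  then obtain s where s: "strict_mono (s::nat\<Rightarrow>nat)" "\<And>k. s k \<in> {k. \<bar>q (r k)\<bar> \<le> M}"
    using infinite_enumerate by blast
  have "bounded (range (\<lambda>k. q (r (s k))))"
    using s(2) by (auto simp: bounded_iff)
  then obtain y s2 where s2: "strict_mono (s2::nat\<Rightarrow>nat)" "((\<lambda>k. q (r (s k))) \<circ> s2) \<longlonglongrightarrow> y"
    using bounded_imp_convergent_subsequence by blast
  define \<phi> where "\<phi> = r \<circ> s \<circ> s2"
  have phi: "strict_mono \<phi>" unfolding \<phi>_def using r s(1) s2(1) by (intro strict_mono_o)
  have u: "(\<lambda>k. p (\<phi> k)) \<longlonglongrightarrow> t"
    using LIMSEQ_subseq_LIMSEQ[OF pt strict_mono_o[OF s(1) s2(1)]] by (simp add: \<phi>_def o_def)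
  have v: "(\<lambda>k. q (\<phi> k)) \<longlonglongrightarrow> y" using s2(2) by (simp add: \<phi>_def o_def)
  have "(t, y) \<in> b"
    by (rule limit_in_b[OF conv mb mB phi _ u v]) (rule inB)
  then show ?thesis unfolding graph_dom_def by blast
qed

theorem lemma2p4:
  fixes \<Omega> :: "'a::euclidean_space set"
    and B :: "nat \<Rightarrow> (real \<times> real) set" and b :: "(real \<times> real) set"
    and zs ws :: "nat \<Rightarrow> 'a \<Rightarrow> real" and z :: "'a \<Rightarrow> real"
  assumes "open \<Omega>" and "bounded \<Omega>"
    and "\<And>n. maximal_monotone_graph (B n)"
    and "maximal_monotone_graph b"
    and "graph_converges B b"
    and "\<And>n. set_integrable lebesgue \<Omega> (zs n)"
    and "\<And>n. set_integrable lebesgue \<Omega> (ws n)"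
    and "\<And>n. AE x in lebesgue. x \<in> \<Omega> \<longrightarrow> (zs n x, ws n x) \<in> B n"
    and "\<exists>C. \<forall>n. (\<integral>x\<in>\<Omega>. \<bar>ws n x\<bar> \<partial>lebesgue) \<le> C"
    and "set_integrable lebesgue \<Omega> z"
    and "(\<lambda>n. \<integral>x\<in>\<Omega>. \<bar>zs n x - z x\<bar> \<partial>lebesgue) \<longlonglongrightarrow> 0"
  shows "AE x in lebesgue. x \<in> \<Omega> \<longrightarrow> z x \<in> graph_dom b"
proof -
  have mB: "\<And>n. monotone_graph (B n)" using assms(3) unfolding maximal_monotone_graph_def by blast
  obtain C where C: "\<And>n. (\<integral>x\<in>\<Omega>. \<bar>ws n x\<bar> \<partial>lebesgue) \<le> C" using assms(9) by blast
  define u where "u n x = indicator \<Omega> x * (zs n x - z x)" for n x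
  have uint: "integrable lebesgue (u n)" for n
  proof -
    have "integrable lebesgue (\<lambda>x. indicator \<Omega> x *\<^sub>R zs n x - indicator \<Omega> x *\<^sub>R z x)"
      using assms(6)[of n] assms(10) unfolding set_integrable_def by (rule Bochner_Integration.integrable_diff)
    then show ?thesis unfolding u_def by (simp add: algebra_simps)
  qed
  have unorm: "(\<integral>x. norm (u n x) \<partial>lebesgue) = (\<integral>x\<in>\<Omega>. \<bar>zs n x - z x\<bar> \<partial>lebesgue)" for n
    unfolding u_def set_lebesgue_integral_def by (intro Bochner_Integration.integral_cong) (auto simp: abs_mult indicator_def)
  obtain r where r: "strict_mono (r::nat\<Rightarrow>nat)" "AE x in lebesgue. (\<lambda>k. u (r k) x) \<longlonglongrightarrow> 0"
    using tendsto_L1_AE_subseq[of lebesgue u, OF uint] assms(11) unfolding unorm by blast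
  define f where "f k x = ennreal (indicator \<Omega> x * \<bar>ws (r k) x\<bar>)" for k x
  have wint: "integrable lebesgue (\<lambda>x. indicator \<Omega> x * \<bar>ws n x\<bar>)" for n
    using set_integrable_abs[OF assms(7)[of n]] unfolding set_integrable_def by simp
  have fmeas[measurable]: "f k \<in> borel_measurable lebesgue" for k
    unfolding f_def using borel_measurable_integrable[OF wint[of "r k"]] by measurable
  have fint: "integral\<^sup>N lebesgue (f k) \<le> ennreal C" for k
  proof -
    have "integral\<^sup>N lebesgue (f k) = ennreal (\<integral>x. indicator \<Omega> x * \<bar>ws (r k) x\<bar> \<partial>lebesgue)"
      unfolding f_def by (rule nn_integral_eq_integral[OF wint]) auto
    also have "\<dots> = ennreal (\<integral>x\<in>\<Omega>. \<bar>ws (r k) x\<bar> \<partial>lebesgue)"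
      unfolding set_lebesgue_integral_def by simp
    also have "\<dots> \<le> ennreal C" using C by (rule ennreal_leI)
    finally show ?thesis .
  qed
  have "(\<integral>\<^sup>+ x. liminf (\<lambda>k. f k x) \<partial>lebesgue) \<le> liminf (\<lambda>k. integral\<^sup>N lebesgue (f k))"
    by (rule nn_integral_liminf) simp
  also have "\<dots> \<le> limsup (\<lambda>k. integral\<^sup>N lebesgue (f k))"
    by (intro Liminf_le_Limsup) simp
  also have "\<dots> \<le> ennreal C"
    by (intro Limsup_bounded always_eventually allI fint)
  finally have H: "(\<integral>\<^sup>+ x. liminf (\<lambda>k. f k x) \<partial>lebesgue) \<le> ennreal C" .
  then have "(\<integral>\<^sup>+ x. liminf (\<lambda>k. f k x) \<partial>lebesgue) \<noteq> \<infinity>"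
    using neq_top_trans[OF ennreal_neq_top H] by simp
  then have AEfin: "AE x in lebesgue. liminf (\<lambda>k. f k x) \<noteq> \<infinity>"
    by (intro nn_integral_PInf_AE) measurable
  have AEB: "AE x in lebesgue. \<forall>n. x \<in> \<Omega> \<longrightarrow> (zs n x, ws n x) \<in> B n"
  proof -
    have "AE x in lebesgue. \<forall>n. x \<in> \<Omega> \<longrightarrow> (zs n x, ws n x) \<in> B n"
      using assms(8) by (subst AE_all_countable) blast
    then show ?thesis by blast
  qed
  show ?thesis
    using AEfin AEB r(2)
  proof eventually_elim
    case (elim x)
    show ?case
    proof
      assume x: "x \<in> \<Omega>"
      have inB: "\<And>n. (zs n x, ws n x) \<in> B n" using elim(2) x by blast
      have "(\<lambda>k. zs (r k) x - z x) \<longlonglongrightarrow> 0" using elim(3) x by (simp add: u_def)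
      then have pt: "(\<lambda>k. zs (r k) x) \<longlonglongrightarrow> z x" by (simp add: LIM_zero_iff)
      define L where "L = liminf (\<lambda>k. f k x)"
      define M where "M = enn2real L + 1"
      have fr: "frequently (\<lambda>k. \<bar>ws (r k) x\<bar> \<le> M) sequentially"
      proof (rule ccontr)
        assume "\<not> ?thesis"
        then have "eventually (\<lambda>k. \<bar>ws (r k) x\<bar> > M) sequentially"
          by (simp add: not_frequently not_le)
        then have "eventually (\<lambda>k. ennreal M \<le> f k x) sequentially"
          by eventually_elim (simp add: f_def x)
        then have "ennreal M \<le> L" unfolding L_def by (rule Liminf_bounded)
        moreover have "L = ennreal (enn2real L)" using elim(1) unfolding L_def
          by (simp add: ennreal_enn2real_if)
        ultimately have "ennreal (enn2real L + 1) \<le> ennreal (enn2real L)" unfolding M_def by simp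
        then have "enn2real L + 1 \<le> enn2real L" by (subst (asm) ennreal_le_iff) auto
        then show False by simp
      qed
      show "z x \<in> graph_dom b"
        by (rule pointwise[OF assms(5) assms(4) mB r(1) inB pt fr])
    qed
  qed
qed
end
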